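(* For all $t\in\mathbb N$ we have $M_t=(0,0,\tfrac12,-\tfrac12,0,0)^T$ and \[ V_{2t}=\frac12\begin{pmatrix}1&1&0&0&0&0\\1&1&0&0&0&0\\1&1&0&0&0&0\\0&0&1&1&0&0\\0&0&1&1&0&0\\0&0&1&1&0&0\end{pmatrix}V_t+\frac14\begin{pmatrix}0\\0\\1\\4\\1\\9\end{pmatrix},\qquad V_{2t+1}=\frac12\begin{pmatrix}0&0&1&1&0&0\\0&0&1&1&0&0\\0&0&1&1&0&0\\0&0&0&0&1&1\\0&0&0&0&1&1\\0&0&0&0&1&1\end{pmatrix}V_t+\frac14\begin{pmatrix}1\\9\\4\\1\\0\\0\end{pmatrix}, \] with $V_0=\frac14(0,0,1,9,6,14)^T$.
   Context: Let $\mathsf r(n)$ be the number of (overlapping) occurrences of $\mathtt{11}$ in the binary expansion of $n\in\mathbb N=\{0,1,\dots\}$, and $d(t,n)=\mathsf r(n+t)-\mathsf r(n)$. Let $a_t(k)$, $b_t(k)$ ($k\in\mathbb Z$) be the asymptotic densities (which exist and define probability distributions on $\mathbb Z$) of $\{n:d(t,2n)=k\}$ and $\{n:d(t,2n+1)=k\}$. Let $m_t^\alpha=\sum_k k a_t(k)$, $m_t^\beta=\sum_k k b_t(k)$, $v_t^\alpha=\sum_k(k-m_t^\alpha)^2a_t(k)$, $v_t^\beta=\sum_k(k-m_t^\beta)^2b_t(k)$, and $M_t=(m^\alpha_{2t},m^\beta_{2t},m^\alpha_{2t+1},m^\beta_{2t+1},m^\alpha_{2t+2},m^\beta_{2t+2})^T$,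 $V_t=(v^\alpha_{2t},v^\beta_{2t},v^\alpha_{2t+1},v^\beta_{2t+1},v^\alpha_{2t+2},v^\beta_{2t+2})^T$. *)

theory Defs
  imports "HOL-Analysis.Analysis"
begin

text \<open>r n = number of (overlapping) occurrences of the block 11 in the binary
  expansion of n: positions i such that bits i and i+1 of n are both 1.\<close>
definition r :: "nat \<Rightarrow> nat" where
  "r n = card {i::nat. (n div 2 ^ i) mod 4 = 3}"

definition d :: "nat \<Rightarrow> nat \<Rightarrow> int" where
  "d t n = int (r (n + t)) - int (r n)"

text \<open>Asymptotic density of a set of naturals (as a limit; existence is
  part of the paper's standing facts).\<close>
definition density :: "nat set \<Rightarrow> real" where
  "density A = lim (\<lambda>N. real (card (A \<inter> {..<N})) / real N)"

definition a :: "nat \<Rightarrow> int \<Rightarrow> real" where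
  "a t k = density {n. d t (2 * n) = k}"

definition b :: "nat \<Rightarrow> int \<Rightarrow> real" where
  "b t k = density {n. d t (2 * n + 1) = k}"

definition m_alpha :: "nat \<Rightarrow> real" where
  "m_alpha t = (\<Sum>\<^sub>\<infinity>k\<in>(UNIV::int set). real_of_int k * a t k)"

definition m_beta :: "nat \<Rightarrow> real" where
  "m_beta t = (\<Sum>\<^sub>\<infinity>k\<in>(UNIV::int set). real_of_int k * b t k)"

definition v_alpha :: "nat \<Rightarrow> real" where
  "v_alpha t = (\<Sum>\<^sub>\<infinity>k\<in>(UNIV::int set). (real_of_int k - m_alpha t)^2 * a t k)"

definition v_beta :: "nat \<Rightarrow> real" where
  "v_beta t = (\<Sum>\<^sub>\<infinity>k\<in>(UNIV::int set). (real_of_int k - m_beta t)^2 * b t k)"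

definition M :: "nat \<Rightarrow> real^6" where
  "M t = vector [m_alpha (2*t), m_beta (2*t), m_alpha (2*t+1), m_beta (2*t+1),
                 m_alpha (2*t+2), m_beta (2*t+2)]"

definition V :: "nat \<Rightarrow> real^6" where
  "V t = vector [v_alpha (2*t), v_beta (2*t), v_alpha (2*t+1), v_beta (2*t+1),
                 v_alpha (2*t+2), v_beta (2*t+2)]"

definition A0 :: "real^6^6" where
  "A0 = vector [vector [1,1,0,0,0,0], vector [1,1,0,0,0,0], vector [1,1,0,0,0,0],
                vector [0,0,1,1,0,0], vector [0,0,1,1,0,0], vector [0,0,1,1,0,0]]"

definition A1 :: "real^6^6" where
  "A1 = vector [vector [0,0,1,1,0,0], vector [0,0,1,1,0,0], vector [0,0,1,1,0,0],
                vector [0,0,0,0,1,1], vector [0,0,0,0,1,1], vector [0,0,0,0,1,1]]"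

end

theory Submission
  imports Defs "HOL-Real_Asymp.Real_Asymp"
begin


lemma div2_Suc: "(m::nat) div 2 ^ Suc j = (m div 2) div 2 ^ j"
  by (simp add: div_mult2_eq power_Suc)

lemma odd_div: "Suc (2*n) div (2 * 2^j) = n div (2::nat)^j"
  by (simp add: div_mult2_eq)

lemma S_finite: "finite {i::nat. ((n::nat) div 2^i) mod 4 = 3}"
proof (rule finite_subset[of _ "{..<n}"])
  show "{i. (n div 2^i) mod 4 = 3} \<subseteq> {..<n}"
  proof
    fix i assume "i \<in> {i. (n div 2^i) mod 4 = 3}"
    hence "n div 2^i \<noteq> 0" by auto
    hence "2^i \<le> n" by (simp add: div_eq_0_iff not_less)
    moreover have "i < 2^i" by (rule less_exp)
    ultimately have "i < n" by linarith
    then show "i \<in> {..<n}" by simp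
  qed
qed auto

lemma even_div: "(2*n) div (2 * 2^j) = n div (2::nat)^j"
  by (simp add: div_mult2_eq)

lemma set_even: "{i. (2*n div 2^i) mod 4 = 3} = Suc ` {i. (n div 2^i) mod 4 = (3::nat)}"
proof (intro set_eqI iffI)
  fix i assume "i \<in> {i. (2*n div 2^i) mod 4 = 3}"
  then have h: "(2*n div 2^i) mod 4 = 3" by simp
  show "i \<in> Suc ` {i. (n div 2^i) mod 4 = 3}"
  proof (cases i)
    case 0
    then have "(2*n) mod 4 = 3" using h by simp
    then have False by presburger
    then show ?thesis ..
  next
    case (Suc j)
    then have "(n div 2^j) mod 4 = 3" using h by (simp add: even_div)
    then show ?thesis using Suc by auto
  qed
next
  fix i assume "i \<in> Suc ` {i. (n div 2^i) mod 4 = (3::nat)}"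
  then show "i \<in> {i. (2*n div 2^i) mod 4 = 3}" by (auto simp: even_div)
qed

lemma set_odd: "{i. ((2*n+1) div 2^i) mod 4 = 3} = (if odd n then {0} else {}) \<union> Suc ` {i. (n div 2^i) mod 4 = (3::nat)}"
proof (intro set_eqI iffI)
  fix i assume "i \<in> {i. ((2*n+1) div 2^i) mod 4 = 3}"
  then have h: "((2*n+1) div 2^i) mod 4 = 3" by simp
  show "i \<in> (if odd n then {0} else {}) \<union> Suc ` {i. (n div 2^i) mod 4 = 3}"
  proof (cases i)
    case 0
    then have "(2*n+1) mod 4 = 3" using h by simp
    then have "odd n" by presburger
    then show ?thesis using 0 by simp
  next
    case (Suc j)
    then have "(n div 2^j) mod 4 = 3" using h unfolding Suc div2_Suc by simp
    then show ?thesis using Suc by auto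
  qed
next
  fix i assume "i \<in> (if odd n then {0} else {}) \<union> Suc ` {i. (n div 2^i) mod 4 = (3::nat)}"
  then consider "i = 0" "odd n" | j where "i = Suc j" "(n div 2^j) mod 4 = 3"
    by (auto split: if_splits)
  then show "i \<in> {i. ((2*n+1) div 2^i) mod 4 = 3}"
  proof cases
    case 1
    then have "(2*n+1) mod 4 = 3" by presburger
    then show ?thesis using 1 by simp
  next
    case 2
    then show ?thesis by (simp add: odd_div)
  qed
qed

lemma r_even: "r (2*n) = r n"
  unfolding r_def set_even by (simp add: card_image)

lemma r_odd: "r (2*n+1) = r n + n mod 2"
proof -
  have "0 \<notin> Suc ` {i. (n div 2^i) mod 4 = (3::nat)}" by auto
  then show ?thesis
    unfolding r_def set_odd using S_finite[of n]
    by (cases "odd n") (auto simp: card_image card_insert_if odd_iff_mod_2_eq_one)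
qed

lemma E1: "d (2 * s) (2*n) = d s n"
  unfolding d_def by (metis distrib_left r_even)
lemma E2: "d (2 * s) (2*n+1) = d s n + int ((n+s) mod 2) - int (n mod 2)"
proof -
  have h: "2*n+1+2 * s = 2*(n+s)+1" by simp
  show ?thesis unfolding d_def h r_odd by simp
qed
lemma E3: "d (2 * s+1) (2*n) = d s n + int ((n+s) mod 2)"
proof -
  have h: "2*n+(2 * s+1) = 2*(n+s)+1" by simp
  show ?thesis unfolding d_def h r_odd r_even by simp
qed
lemma E4: "d (2 * s+1) (2*n+1) = d (s+1) n - int (n mod 2)"
proof -
  have h: "2*n+1+(2 * s+1) = 2*(n+(s+1))" by simp
  show ?thesis unfolding d_def h r_odd r_even by simp
qed

definition hasd :: "nat set \<Rightarrow> real \<Rightarrow> bool" where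
  "hasd A x \<longleftrightarrow> (\<lambda>N. real (card (A \<inter> {..<N})) / real N) \<longlonglongrightarrow> x"

lemma hasd_density: "hasd A x \<Longrightarrow> density A = x"
  unfolding hasd_def density_def by (rule limI)

lemma cnt_Suc: "card (A \<inter> {..<Suc N}) = card (A \<inter> {..<N}) + (if N \<in> A then 1 else 0)"
proof -
  have "A \<inter> {..<Suc N} = (if N \<in> A then insert N (A \<inter> {..<N}) else A \<inter> {..<N})"
    by (auto simp: less_Suc_eq)
  then show ?thesis by auto
qed

lemma cnt_split: fixes P :: "nat \<Rightarrow> bool" shows "card ({n. P n} \<inter> {..<2*N}) = card ({m. P (2*m)} \<inter> {..<N}) + card ({m. P (2*m+1)} \<inter> {..<N})"
proof (induction N)
  case 0 then show ?case by simp
next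
  case (Suc N)
  have "2 * Suc N = Suc (Suc (2*N))" by simp
  then show ?case using Suc by (simp only: cnt_Suc) simp
qed

lemma cnt_split': fixes P :: "nat \<Rightarrow> bool" shows "card ({n. P n} \<inter> {..<2*N+1}) = card ({m. P (2*m)} \<inter> {..<Suc N}) + card ({m. P (2*m+1)} \<inter> {..<N})"
  using cnt_split[of P N] by (simp add: cnt_Suc)

lemma seq_even_odd:
  assumes "(\<lambda>n. f (2*n)) \<longlonglongrightarrow> (l::real)" "(\<lambda>n. f (2*n+1)) \<longlonglongrightarrow> l"
  shows "f \<longlonglongrightarrow> l"
proof (rule LIMSEQ_I)
  fix e :: real assume e: "0 < e"
  obtain N1 where N1: "\<And>n. n \<ge> N1 \<Longrightarrow> norm (f (2*n) - l) < e" using LIMSEQ_D[OF assms(1) e] by blast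
  obtain N2 where N2: "\<And>n. n \<ge> N2 \<Longrightarrow> norm (f (2*n+1) - l) < e" using LIMSEQ_D[OF assms(2) e] by blast
  show "\<exists>N. \<forall>n\<ge>N. norm (f n - l) < e"
  proof (intro exI allI impI)
    fix n assume n: "2*N1 + 2*N2 \<le> n"
    show "norm (f n - l) < e"
    proof (cases "even n")
      case True then obtain m where "n = 2*m" by blast
      with n N1[of m] show ?thesis by auto
    next
      case False then obtain m where "n = 2*m+1" using oddE by blast
      with n N2[of m] show ?thesis by auto
    qed
  qed
qed

lemma avg_div: "real (p + q) / real (2*N) = (real p / real N + real q / real N) / 2"
proof -
  have alg: "(x+y)/(2*z) = (x/z + y/z)/(2::real)" for x y z
    by (simp add: add_divide_distrib)
  show ?thesis using alg[of "real p" "real q" "real N"] by simp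
qed

lemma hasd_split:
  assumes "hasd {m. P (2*m)} x" "hasd {m. P (2*m+1)} y"
  shows "hasd {n. P n} ((x+y)/2)"
proof -
  define Ev where "Ev = {m. P (2*m)}"
  define Od where "Od = {m. P (2*m+1)}"
  define e where "e N = real (card (Ev \<inter> {..<N})) / real N" for N
  define fo where "fo N = real (card (Od \<inter> {..<N})) / real N" for N
  have e: "e \<longlonglongrightarrow> x" using assms(1) unfolding hasd_def e_def Ev_def .
  have oc: "fo \<longlonglongrightarrow> y" using assms(2) unfolding hasd_def fo_def Od_def .
  let ?u = "\<lambda>N. real (card ({n. P n} \<inter> {..<N})) / real N"
  have ev: "?u (2*N) = (e N + fo N) / 2" for N
    unfolding e_def fo_def Ev_def Od_def cnt_split by (rule avg_div)
  have od: "?u (2*N+1) = e (Suc N) * (real (Suc N) / real (2*N+1)) + fo N * (real N / real (2*N+1))" for N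
  proof -
    have A: "e (Suc N) * (real (Suc N) / real (2*N+1)) = real (card (Ev \<inter> {..<Suc N})) / real (2*N+1)"
      unfolding e_def by simp
    have B: "fo N * (real N / real (2*N+1)) = real (card (Od \<inter> {..<N})) / real (2*N+1)"
      unfolding fo_def by (cases "N=0") auto
    show ?thesis unfolding A B Ev_def Od_def cnt_split' by (simp add: add_divide_distrib)
  qed
  have t1: "(\<lambda>N. ?u (2*N)) \<longlonglongrightarrow> (x+y)/2"
    unfolding ev by (rule tendsto_divide[OF tendsto_add[OF e oc] tendsto_const]) simp
  have l1: "(\<lambda>N. real (Suc N) / real (2*N+1)) \<longlonglongrightarrow> 1/2" by real_asymp
  have l2: "(\<lambda>N. real N / real (2*N+1)) \<longlonglongrightarrow> 1/2" by real_asymp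
  have t2: "(\<lambda>N. ?u (2*N+1)) \<longlonglongrightarrow> x * (1/2) + y * (1/2)"
    unfolding od by (rule tendsto_add[OF tendsto_mult[OF LIMSEQ_Suc[OF e] l1] tendsto_mult[OF oc l2]])
  have xy: "x * (1/2) + y * (1/2) = (x+y)/2" by simp
  show ?thesis unfolding hasd_def
    by (rule seq_even_odd[OF t1 t2[unfolded xy]])
qed

lemma hasd_UNIV: "hasd UNIV 1"
  unfolding hasd_def
proof (rule tendsto_eventually)
  show "\<forall>\<^sub>F N in sequentially. real (card (UNIV \<inter> {..<N})) / real N = 1"
    using eventually_ge_at_top[of "1::nat"] by eventually_elim simp
qed

lemma hasd_empty: "hasd {} 0"
  unfolding hasd_def by simp



definition hdist :: "(nat \<Rightarrow> int) \<Rightarrow> (int \<Rightarrow> real) \<Rightarrow> bool" where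
  "hdist f P \<longleftrightarrow> (\<forall>k. hasd {n. f n = k} (P k))"

definition avg :: "(int \<Rightarrow> real) \<Rightarrow> (int \<Rightarrow> real) \<Rightarrow> int \<Rightarrow> real" where
  "avg P Q = (\<lambda>k. (P k + Q k) / 2)"

definition shift :: "int \<Rightarrow> (int \<Rightarrow> real) \<Rightarrow> int \<Rightarrow> real" where
  "shift c P = (\<lambda>k. P (k - c))"

definition delta0 :: "int \<Rightarrow> real" where
  "delta0 = (\<lambda>k. if k = 0 then 1 else 0)"

lemma hd_split:
  assumes "hdist g P" "hdist h Q" "\<And>m. f (2*m) = g m" "\<And>m. f (2*m+1) = h m"
  shows "hdist f (avg P Q)"
  unfolding hdist_def avg_def
proof
  fix k
  have "hasd {m. g m = k} (P k)" "hasd {m. h m = k} (Q k)" using assms(1,2) unfolding hdist_def by auto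
  then have "hasd {m. f (2*m) = k} (P k)" "hasd {m. f (2*m+1) = k} (Q k)" using assms(3,4) by simp_all
  from hasd_split[OF this] show "hasd {n. f n = k} ((P k + Q k) / 2)" .
qed

lemma hd_shift:
  assumes "hdist f P"
  shows "hdist (\<lambda>n. f n + c) (shift c P)"
  unfolding hdist_def shift_def
proof
  fix k
  have "{n. f n + c = k} = {n. f n = k - c}" by auto
  then show "hasd {n. f n + c = k} (P (k - c))" using assms unfolding hdist_def by simp
qed

lemma hd_unique:
  assumes "hdist f P"
  shows "(\<lambda>k. density {n. f n = k}) = P"
  using assms unfolding hdist_def by (auto intro!: ext hasd_density)

lemma hd_zero:
  assumes "\<And>n. f n = 0"
  shows "hdist f delta0"
  unfolding hdist_def delta0_def
proof
  fix k
  show "hasd {n. f n = k} (if k = 0 then 1 else 0)"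
  proof (cases "k = 0")
    case True
    then have "{n. f n = k} = UNIV" using assms by auto
    then show ?thesis using True hasd_UNIV by simp
  next
    case False
    then have "{n. f n = k} = {}" using assms by auto
    then show ?thesis using False hasd_empty by simp
  qed
qed

lemma a_eq: "a t = (\<lambda>k. density {n. d t (2*n) = k})"
  by (auto simp: a_def)
lemma b_eq: "b t = (\<lambda>k. density {n. d t (2*n+1) = k})"
  by (auto simp: b_def)

definition good :: "(int \<Rightarrow> real) \<Rightarrow> bool" where
  "good P \<longleftrightarrow> (\<forall>k. 0 \<le> P k) \<and> P summable_on UNIV \<and> (\<lambda>k. (real_of_int k)^2 * P k) summable_on UNIV"

definition m0 :: "(int \<Rightarrow> real) \<Rightarrow> real" where "m0 P = infsum P UNIV"
definition m1 :: "(int \<Rightarrow> real) \<Rightarrow> real" where "m1 P = infsum (\<lambda>k. real_of_int k * P k) UNIV"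
definition m2 :: "(int \<Rightarrow> real) \<Rightarrow> real" where "m2 P = infsum (\<lambda>k. (real_of_int k)^2 * P k) UNIV"

lemma abs_le_sq: "\<bar>k::int\<bar> \<le> k^2"
proof (cases "k = 0")
  case False
  then have "1 \<le> \<bar>k\<bar>" by simp
  then have "\<bar>k\<bar> * 1 \<le> \<bar>k\<bar> * \<bar>k\<bar>" by (intro mult_left_mono) auto
  then show ?thesis by (simp add: power2_eq_square abs_mult[symmetric])
qed simp

lemma good_m1sum:
  assumes "good P"
  shows "(\<lambda>k. real_of_int k * P k) summable_on UNIV"
proof -
  have nn: "\<And>k. 0 \<le> P k" and s0: "P summable_on UNIV" and s2: "(\<lambda>k. (real_of_int k)^2 * P k) summable_on UNIV"
    using assms unfolding good_def by auto
  have g: "(\<lambda>k. P k + (real_of_int k)^2 * P k) summable_on UNIV"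
    using summable_on_add[OF s0 s2] .
  have "(\<lambda>k. norm (P k + (real_of_int k)^2 * P k)) summable_on UNIV"
    using g by (rule summable_on_cong[THEN iffD1, rotated]) (use nn in auto)
  then have "(\<lambda>k. norm (real_of_int k * P k)) summable_on UNIV"
  proof (rule Infinite_Sum.abs_summable_on_comparison_test)
    fix k :: int assume "k \<in> UNIV"
    have "real_of_int \<bar>k\<bar> \<le> (real_of_int k)^2"
      using abs_le_sq[of k] by (metis of_int_le_iff of_int_power)
    then have "\<bar>real_of_int k\<bar> * P k \<le> (real_of_int k)^2 * P k"
      using nn[of k] by (intro mult_right_mono) auto
    moreover have "0 \<le> (real_of_int k)^2 * P k" using nn[of k] by simp
    ultimately show "norm (real_of_int k * P k) \<le> norm (P k + (real_of_int k)^2 * P k)"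
      using nn[of k] by (simp add: abs_mult)
  qed
  then show ?thesis by (rule abs_summable_summable)
qed

lemma avg_sum:
  assumes "F summable_on UNIV" "G summable_on UNIV"
  shows "(\<lambda>k. (F k + G k) / 2) summable_on UNIV \<and>
         infsum (\<lambda>k. (F k + G k) / 2) UNIV = (infsum F UNIV + infsum G UNIV) / (2::real)"
proof -
  have e: "(\<lambda>k. (F k + G k) / 2) = (\<lambda>k. (1/2) * (F k + G k))" by (auto simp: field_simps)
  have s: "(\<lambda>k. F k + G k) summable_on UNIV" using summable_on_add[OF assms] .
  show ?thesis unfolding e
    using summable_on_cmult_right[OF s, of "1/2"] infsum_cmult_right[of "1/2" "\<lambda>k. F k + G k" UNIV]
      infsum_add[OF assms] s by simp
qed

lemma good_avg:
  assumes "good P" "good Q"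
  shows "good (avg P Q)" "m0 (avg P Q) = (m0 P + m0 Q)/2"
    "m1 (avg P Q) = (m1 P + m1 Q)/2" "m2 (avg P Q) = (m2 P + m2 Q)/2"
proof -
  have P: "P summable_on UNIV" "(\<lambda>k. (real_of_int k)^2 * P k) summable_on UNIV" "\<forall>k. 0 \<le> P k"
    using assms(1) unfolding good_def by auto
  have Q: "Q summable_on UNIV" "(\<lambda>k. (real_of_int k)^2 * Q k) summable_on UNIV" "\<forall>k. 0 \<le> Q k"
    using assms(2) unfolding good_def by auto
  have e2: "(\<lambda>k. (real_of_int k)^2 * avg P Q k) = (\<lambda>k. ((real_of_int k)^2 * P k + (real_of_int k)^2 * Q k) / 2)"
    by (auto simp: avg_def field_simps)
  have e1: "(\<lambda>k. real_of_int k * avg P Q k) = (\<lambda>k. (real_of_int k * P k + real_of_int k * Q k) / 2)"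
    by (auto simp: avg_def field_simps)
  have e0: "avg P Q = (\<lambda>k. (P k + Q k) / 2)" by (simp add: avg_def)
  show "good (avg P Q)" unfolding good_def e2
    using avg_sum[OF P(1) Q(1)] avg_sum[OF P(2) Q(2)] P(3) Q(3) by (auto simp: avg_def)
  show "m0 (avg P Q) = (m0 P + m0 Q)/2" unfolding m0_def e0 using avg_sum[OF P(1) Q(1)] by simp
  show "m2 (avg P Q) = (m2 P + m2 Q)/2" unfolding m2_def e2 using avg_sum[OF P(2) Q(2)] by simp
  show "m1 (avg P Q) = (m1 P + m1 Q)/2" unfolding m1_def e1
    using avg_sum[OF good_m1sum[OF assms(1)] good_m1sum[OF assms(2)]] by simp
qed

lemma bij_plus: "bij_betw (\<lambda>j::int. j + c) UNIV UNIV"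
  by (rule bij_betwI[where g="\<lambda>k. k - c"]) auto

lemma shift_reindex:
  fixes w :: "int \<Rightarrow> real"
  shows "((\<lambda>k. w k * P (k - c)) summable_on UNIV \<longleftrightarrow> (\<lambda>j. w (j + c) * P j) summable_on UNIV) \<and>
         infsum (\<lambda>k. w k * P (k - c)) UNIV = infsum (\<lambda>j. w (j + c) * P j) UNIV"
  using summable_on_reindex_bij_betw[OF bij_plus[of c], of "\<lambda>k. w k * P (k - c)"]
    infsum_reindex_bij_betw[OF bij_plus[of c], of "\<lambda>k. w k * P (k - c)"] by simp

lemma good_shift:
  assumes "good P"
  shows "good (shift c P)" "m0 (shift c P) = m0 P"
    "m1 (shift c P) = m1 P + of_int c * m0 P"
    "m2 (shift c P) = m2 P + 2 * of_int c * m1 P + (of_int c)^2 * m0 P"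
proof -
  have P0: "P summable_on UNIV" and P2: "(\<lambda>k. (real_of_int k)^2 * P k) summable_on UNIV"
    and nn: "\<forall>k. 0 \<le> P k"
    using assms unfolding good_def by auto
  have P1: "(\<lambda>k. real_of_int k * P k) summable_on UNIV" using good_m1sum[OF assms] .
  note R0 = shift_reindex[of "\<lambda>_. 1" P c]
  note R1 = shift_reindex[of "\<lambda>k. real_of_int k" P c]
  note R2 = shift_reindex[of "\<lambda>k. (real_of_int k)^2" P c]
  have E1: "(\<lambda>j. real_of_int (j + c) * P j) = (\<lambda>j. real_of_int j * P j + of_int c * P j)"
    by (auto simp: algebra_simps)
  have E2: "(\<lambda>j. (real_of_int (j + c))^2 * P j) = (\<lambda>j. ((real_of_int j)^2 * P j + (2 * of_int c) * (real_of_int j * P j)) + (of_int c)^2 * P j)"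
    by (auto simp: algebra_simps power2_eq_square)
  have S1: "(\<lambda>j. real_of_int j * P j + of_int c * P j) summable_on UNIV"
    by (intro summable_on_add P1 summable_on_cmult_right P0)
  have S2a: "(\<lambda>j. (real_of_int j)^2 * P j + (2 * of_int c) * (real_of_int j * P j)) summable_on UNIV"
    by (intro summable_on_add P2 summable_on_cmult_right P1)
  have S2: "(\<lambda>j. ((real_of_int j)^2 * P j + (2 * of_int c) * (real_of_int j * P j)) + (of_int c)^2 * P j) summable_on UNIV"
    by (intro summable_on_add S2a summable_on_cmult_right P0)
  show "good (shift c P)" unfolding good_def shift_def
    using R0 R2 P0 S2 nn unfolding E2 by simp
  show "m0 (shift c P) = m0 P" unfolding m0_def shift_def using R0 by simp
  show "m1 (shift c P) = m1 P + of_int c * m0 P" unfolding m1_def m0_def shift_def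
    using R1 unfolding E1
    by (simp add: infsum_add[OF P1 summable_on_cmult_right[OF P0]] infsum_cmult_right[OF P0])
  show "m2 (shift c P) = m2 P + 2 * of_int c * m1 P + (of_int c)^2 * m0 P" unfolding m2_def m1_def m0_def shift_def
    using R2 unfolding E2
    by (simp add: infsum_add[OF S2a summable_on_cmult_right[OF P0]] infsum_add[OF P2 summable_on_cmult_right[OF P1]]
         infsum_cmult_right[OF P0] infsum_cmult_right[OF P1])
qed

lemma delta0_has: "(delta0 has_sum 1) UNIV" "((\<lambda>k. real_of_int k * delta0 k) has_sum 0) UNIV"
  "((\<lambda>k. (real_of_int k)^2 * delta0 k) has_sum 0) UNIV"
  by (rule has_sum_finite_neutralI[of "{0}"]; simp add: delta0_def)+

lemma good_delta0: "good delta0" "m0 delta0 = 1" "m1 delta0 = 0" "m2 delta0 = 0"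
  using delta0_has unfolding good_def m0_def m1_def m2_def
  by (auto simp: delta0_def infsumI summable_on_def)

lemma var_eq:
  assumes "good P" "m0 P = 1"
  shows "infsum (\<lambda>k. (real_of_int k - mu)^2 * P k) UNIV = m2 P - 2 * mu * m1 P + mu^2"
proof -
  have P0: "P summable_on UNIV" and P2: "(\<lambda>k. (real_of_int k)^2 * P k) summable_on UNIV"
    using assms unfolding good_def by auto
  have P1: "(\<lambda>k. real_of_int k * P k) summable_on UNIV" using good_m1sum[OF assms(1)] .
  have E: "(\<lambda>k. (real_of_int k - mu)^2 * P k) = (\<lambda>k. ((real_of_int k)^2 * P k + (-2 * mu) * (real_of_int k * P k)) + mu^2 * P k)"
    by (auto simp: algebra_simps power2_eq_square)
  have S2a: "(\<lambda>j. (real_of_int j)^2 * P j + (-2 * mu) * (real_of_int j * P j)) summable_on UNIV"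
    by (intro summable_on_add P2 summable_on_cmult_right P1)
  show ?thesis unfolding E infsum_add[OF S2a summable_on_cmult_right[OF P0]] infsum_add[OF P2 summable_on_cmult_right[OF P1]]
         infsum_cmult_right[OF P0] infsum_cmult_right[OF P1]
    using assms(2) unfolding m0_def m1_def m2_def by simp
qed



lemma par1: "int ((2*m+s) mod 2) = int (s mod 2)" by presburger
lemma par2: "int ((2*m+1+s) mod 2) - 1 = - int (s mod 2)" by presburger
lemma par3: "int ((2*m+1+s) mod 2) = 1 - int (s mod 2)" by presburger

lemma stepA_even:
  assumes "hdist (\<lambda>n. d s (2*n)) P" "hdist (\<lambda>n. d s (2*n+1)) Q"
  shows "hdist (\<lambda>n. d (2 * s) (2*n)) (avg P Q)"
  by (rule hd_split[OF assms]) (simp_all only: E1)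

lemma stepB_even:
  assumes "hdist (\<lambda>n. d s (2*n)) P" "hdist (\<lambda>n. d s (2*n+1)) Q"
  shows "hdist (\<lambda>n. d (2 * s) (2*n+1)) (avg (shift (int (s mod 2)) P) (shift (- int (s mod 2)) Q))"
proof (rule hd_split[OF hd_shift[OF assms(1)] hd_shift[OF assms(2)]])
  fix m
  show "d (2 * s) (2*(2*m)+1) = d s (2*m) + int (s mod 2)"
    unfolding E2 using par1[of m s] by simp
  show "d (2 * s) (2*(2*m+1)+1) = d s (2*m+1) + - int (s mod 2)"
    unfolding E2 using par2[of m s] by simp
qed

lemma stepA_odd:
  assumes "hdist (\<lambda>n. d s (2*n)) P" "hdist (\<lambda>n. d s (2*n+1)) Q"
  shows "hdist (\<lambda>n. d (2 * s+1) (2*n)) (avg (shift (int (s mod 2)) P) (shift (1 - int (s mod 2)) Q))"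
proof (rule hd_split[OF hd_shift[OF assms(1)] hd_shift[OF assms(2)]])
  fix m
  show "d (2 * s+1) (2*(2*m)) = d s (2*m) + int (s mod 2)"
    unfolding E3 using par1[of m s] by simp
  show "d (2 * s+1) (2*(2*m+1)) = d s (2*m+1) + (1 - int (s mod 2))"
    unfolding E3 using par3[of m s] by simp
qed

lemma stepB_odd:
  assumes "hdist (\<lambda>n. d (s+1) (2*n)) P" "hdist (\<lambda>n. d (s+1) (2*n+1)) Q"
  shows "hdist (\<lambda>n. d (2 * s+1) (2*n+1)) (avg P (shift (-1) Q))"
proof (rule hd_split[OF assms(1) hd_shift[OF assms(2)]])
  fix m
  show "d (2 * s+1) (2*(2*m)+1) = d (s+1) (2*m)"
    unfolding E4 by simp
  show "d (2 * s+1) (2*(2*m+1)+1) = d (s+1) (2*m+1) + - 1"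
    unfolding E4 by simp
qed

lemma d0: "d 0 n = 0" by (simp add: d_def)
lemma E3': "d 1 (2*n) = int (n mod 2)" using E3[of 0 n] by (simp add: d0)
lemma E4': "d 1 (2*n+1) = d 1 n - int (n mod 2)" using E4[of 0 n] by simp

lemma d1_le: "d 1 n \<le> 1"
proof (induction n rule: less_induct)
  case (less n)
  show ?case
  proof (cases "even n")
    case True then obtain m where "n = 2*m" by blast
    then show ?thesis using E3'[of m] by simp
  next
    case False then obtain m where n: "n = 2*m+1" using oddE by blast
    then have "m < n" by simp
    then show ?thesis using less.IH[of m] E4'[of m] n by simp
  qed
qed

definition G1 :: "int \<Rightarrow> real" where "G1 = avg (shift 0 delta0) (shift 1 delta0)"

lemma hd0a: "hdist (\<lambda>n. d 0 (2*n)) delta0" by (rule hd_zero) (simp add: d0)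
lemma hd0b: "hdist (\<lambda>n. d 0 (2*n+1)) delta0" by (rule hd_zero) (simp add: d0)

lemma hd1a: "hdist (\<lambda>n. d 1 (2*n)) G1"
  using stepA_odd[OF hd0a hd0b] unfolding G1_def by simp

lemma G1_val: "G1 k = (if k = 0 \<or> k = 1 then 1/2 else 0)"
  by (auto simp: G1_def avg_def shift_def delta0_def)

definition F1 :: "int \<Rightarrow> real" where
  "F1 k = (if 2 \<le> k then 0 else if k = 1 then 1/4 else 3/8 * (1/2)^nat(-k))"

lemma F1_rec:
  assumes "k \<le> 1"
  shows "F1 k = (G1 k + F1 (k+1)) / 2"
proof -
  consider "k = 1" | "k = 0" | "k \<le> -1" using assms by linarith
  then show ?thesis
  proof cases
    case 3
    then have "nat (-k) = Suc (nat (-(k+1)))" by simp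
    then show ?thesis using 3 by (simp add: F1_def G1_val)
  qed (auto simp: F1_def G1_val)
qed

lemma hasd_b1: "hasd {n. d 1 (2*n+1) = k} (F1 k)"
proof (cases "2 \<le> k")
  case True
  then have "{n. d 1 (2*n+1) = k} = {}" using d1_le[of "2*n+1" for n] by (auto, smt (verit) d1_le)
  then show ?thesis using True hasd_empty by (simp add: F1_def)
next
  case False
  have main: "hasd {n. d 1 (2*n+1) = 2 - int j} (F1 (2 - int j))" for j
  proof (induction j)
    case 0
    have "{n. d 1 (2*n+1) = 2} = {}" using d1_le by (auto, smt (verit) d1_le)
    then show ?case using hasd_empty by (simp add: F1_def)
  next
    case (Suc j)
    define k where "k = 1 - int j"
    have kk: "2 - int (Suc j) = k" "2 - int j = k + 1" by (auto simp: k_def)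
    have h1: "hasd {m. d 1 (2*(2*m)+1) = k} (G1 k)"
      using hd1a unfolding hdist_def E4' by simp
    have h2: "hasd {m. d 1 (2*(2*m+1)+1) = k} (F1 (k+1))"
    proof -
      have "{m. d 1 (2*(2*m+1)+1) = k} = {m. d 1 (2*m+1) = k+1}"
        unfolding E4'[of "2*m+1" for m] by auto
      then show ?thesis using Suc.IH unfolding kk by simp
    qed
    have "k \<le> 1" by (simp add: k_def)
    then have fk: "F1 k = (G1 k + F1 (k+1)) / 2" by (rule F1_rec)
    show ?case unfolding kk fk using hasd_split[OF h1 h2] by simp
  qed
  have "k = 2 - int (nat (2 - k))" using False by simp
  then show ?thesis using main[of "nat (2 - k)"] by simp
qed

lemma hd1b: "hdist (\<lambda>n. d 1 (2*n+1)) F1"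
  unfolding hdist_def using hasd_b1 by simp



lemma F1_nn: "0 \<le> F1 k" by (simp add: F1_def)

lemma F1_zero: "2 \<le> k \<Longrightarrow> F1 k = 0" by (simp add: F1_def)

lemma F1_bound: "F1 (1 - int n) \<le> (1/2)^n"
proof (cases n)
  case 0 then show ?thesis by (simp add: F1_def)
next
  case (Suc m)
  then have "F1 (1 - int n) = 3/8 * (1/2)^m" by (simp add: F1_def)
  also have "\<dots> \<le> 1/2 * (1/2)^m" by (intro mult_right_mono) auto
  finally show ?thesis using Suc by simp
qed

lemma sq_ineq:
  fixes x :: real assumes "2 \<le> x"
  shows "(x + 2)^2 \<le> 9/5 * (x + 1)^2"
proof -
  have h: "0 \<le> x * (x - 2)" using assms by simp
  define y where "y = x * (x - 2)"
  have hy: "0 \<le> y" using h by (simp add: y_def)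
  have e: "9/5 * (x+1)^2 - (x+2)^2 = (4*y + 6*x - 11)/5"
    by (simp add: y_def power2_eq_square field_simps)
  have lin: "\<And>U V :: real. U - V = (4*y + 6*x - 11)/5 \<Longrightarrow> V \<le> U"
    using hy assms by (simp add: field_simps)
  show ?thesis using lin[OF e] .
qed

lemma summ_geo: "summable (\<lambda>n. (real n + 1)^2 * (1/2)^n)"
proof (rule summable_ratio_test[where c="9/10" and N=2])
  fix n :: nat assume "2 \<le> n"
  then have "(real n + 2)^2 \<le> 9/5 * (real n + 1)^2" by (intro sq_ineq) simp
  then have "(real n + 2)^2 * (1/2)^n / 2 \<le> 9/5 * (real n + 1)^2 * (1/2)^n / 2"
    by (intro divide_right_mono mult_right_mono) auto
  then show "norm ((real (Suc n) + 1)^2 * (1/2)^Suc n) \<le> 9/10 * norm ((real n + 1)^2 * (1/2)^n)"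
    by (simp add: add.commute)
qed simp

lemma good_F1: "good F1"
proof -
  define H where "H k = (1 + (real_of_int k)^2) * F1 k" for k
  define h where "h n = 1 - int n" for n :: nat
  have Hnn: "0 \<le> H k" for k unfolding H_def using F1_nn[of k] by simp
  have b1: "(1 + (real_of_int (1 - int n))^2) \<le> 2 * (real n + 1)^2" for n
  proof -
    have "0 \<le> (real n)^2" by simp
    then show ?thesis by (simp add: power2_eq_square algebra_simps)
  qed
  have bnd: "norm ((H \<circ> h) n) \<le> 2 * ((real n + 1)^2 * (1/2)^n)" for n
  proof -
    have "norm ((H \<circ> h) n) = (1 + (real_of_int (1 - int n))^2) * F1 (1 - int n)"
      using Hnn[of "h n"] by (simp add: H_def h_def)
    also have "\<dots> \<le> (2 * (real n + 1)^2) * (1/2)^n"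
      by (intro mult_mono b1 F1_bound) (auto simp: F1_nn)
    finally show ?thesis by simp
  qed
  have "summable (H \<circ> h)"
    by (rule summable_comparison_test'[OF summable_mult[OF summ_geo, of 2], of 0]) (use bnd in auto)
  then have s1: "(H \<circ> h) summable_on UNIV"
    by (subst summable_on_UNIV_nonneg_real_iff) (auto simp: Hnn)
  have inj: "inj_on h UNIV" unfolding h_def inj_on_def by auto
  have img: "h ` UNIV = {..1}"
  proof (intro set_eqI iffI)
    fix k assume "k \<in> {..(1::int)}"
    then have "k = h (nat (1 - k))" by (simp add: h_def)
    then show "k \<in> h ` UNIV" by blast
  qed (auto simp: h_def)
  have s2: "H summable_on {..1}" using summable_on_reindex[OF inj, of H] s1 img by simp
  have s3: "H summable_on UNIV"
    using s2 summable_on_cong_neutral[of UNIV "{..1}" H H] by (auto simp: H_def F1_zero)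
  have HF: "F1 k \<le> H k" "(real_of_int k)^2 * F1 k \<le> H k" for k
  proof -
    have "0 \<le> (real_of_int k)^2 * F1 k" "0 \<le> F1 k" by (simp_all add: F1_nn)
    then show "F1 k \<le> H k" "(real_of_int k)^2 * F1 k \<le> H k" by (simp_all add: H_def algebra_simps)
  qed
  have c0: "F1 summable_on UNIV"
    by (rule summable_on_comparison_test[OF s3]) (auto simp: HF F1_nn)
  have c2: "(\<lambda>k. (real_of_int k)^2 * F1 k) summable_on UNIV"
    by (rule summable_on_comparison_test[OF s3]) (auto simp: HF F1_nn)
  show ?thesis unfolding good_def using c0 c2 F1_nn by auto
qed

lemma hd_a: "hdist (\<lambda>n. d t (2*n)) P \<Longrightarrow> a t = P"
  using hd_unique a_eq by metis
lemma hd_b: "hdist (\<lambda>n. d t (2*n+1)) P \<Longrightarrow> b t = P"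
  using hd_unique b_eq by metis

lemma good_G1: "good G1"
  unfolding G1_def by (intro good_avg good_shift good_delta0)

lemma cases4: "(t::nat) = 0 \<or> t = 1 \<or> (\<exists>s. t = 2 * s \<and> 1 \<le> s) \<or> (\<exists>s. t = 2 * s + 1 \<and> 1 \<le> s)"
  by presburger

lemma ALL: "hdist (\<lambda>n. d t (2*n)) (a t) \<and> hdist (\<lambda>n. d t (2*n+1)) (b t) \<and> good (a t) \<and> good (b t)"
proof (induction t rule: less_induct)
  case (less t)
  consider "t = 0" | "t = 1" | s where "t = 2 * s" "1 \<le> s" | s where "t = 2 * s + 1" "1 \<le> s"
    using cases4[of t] by blast
  then show ?case
  proof cases
    case 1
    have "a t = delta0" "b t = delta0" using hd_a[OF hd0a] hd_b[OF hd0b] 1 by auto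
    then show ?thesis using hd0a hd0b good_delta0 1 by simp
  next
    case 2
    have "a t = G1" "b t = F1" using hd_a[OF hd1a] hd_b[OF hd1b] 2 by auto
    then show ?thesis using hd1a hd1b good_G1 good_F1 2 by simp
  next
    case 3
    then have "s < t" by simp
    note IH = less.IH[OF this]
    let ?P = "avg (a s) (b s)"
    let ?Q = "avg (shift (int (s mod 2)) (a s)) (shift (- int (s mod 2)) (b s))"
    have h1: "hdist (\<lambda>n. d t (2*n)) ?P" using stepA_even[of s "a s" "b s"] IH 3 by simp
    have h2: "hdist (\<lambda>n. d t (2*n+1)) ?Q" using stepB_even[of s "a s" "b s"] IH 3 by simp
    have g: "good ?P" "good ?Q" using IH by (auto intro!: good_avg good_shift)
    show ?thesis using hd_a[OF h1] hd_b[OF h2] h1 h2 g by simp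
  next
    case 4
    then have "s < t" "s + 1 < t" by simp_all
    note IH1 = less.IH[OF this(1)] and IH2 = less.IH[OF this(2)]
    let ?P = "avg (shift (int (s mod 2)) (a s)) (shift (1 - int (s mod 2)) (b s))"
    let ?Q = "avg (a (s+1)) (shift (-1) (b (s+1)))"
    have h1: "hdist (\<lambda>n. d t (2*n)) ?P" using stepA_odd[of s "a s" "b s"] IH1 4 by simp
    have h2: "hdist (\<lambda>n. d t (2*n+1)) ?Q" using stepB_odd[of s "a (s+1)" "b (s+1)"] IH2 4 by simp
    have g: "good ?P" "good ?Q" using IH1 IH2 by (auto intro!: good_avg good_shift)
    show ?thesis using hd_a[OF h1] hd_b[OF h2] h1 h2 g by simp
  qed
qed

lemma R1: "a (2 * s) = avg (a s) (b s)"
  using hd_a[OF stepA_even] ALL by blast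
lemma R2: "b (2 * s) = avg (shift (int (s mod 2)) (a s)) (shift (- int (s mod 2)) (b s))"
  using hd_b[OF stepB_even] ALL by blast
lemma R3: "a (2 * s + 1) = avg (shift (int (s mod 2)) (a s)) (shift (1 - int (s mod 2)) (b s))"
  using hd_a[OF stepA_odd] ALL by blast
lemma R4: "b (2 * s + 1) = avg (a (s+1)) (shift (-1) (b (s+1)))"
  using hd_b[OF stepB_odd] ALL by blast

lemma gA: "good (a t)" and gB: "good (b t)" using ALL by auto

lemma momA_even: "m0 (a (2 * s)) = (m0 (a s) + m0 (b s))/2"
  "m1 (a (2 * s)) = (m1 (a s) + m1 (b s))/2" "m2 (a (2 * s)) = (m2 (a s) + m2 (b s))/2"
  unfolding R1 using good_avg[OF gA gB] by auto

lemma momB_even: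
  "m0 (b (2 * s)) = (m0 (a s) + m0 (b s))/2"
  "m1 (b (2 * s)) = (m1 (a s) + real (s mod 2) * m0 (a s) + m1 (b s) - real (s mod 2) * m0 (b s))/2"
  "m2 (b (2 * s)) = (m2 (a s) + 2 * real (s mod 2) * m1 (a s) + (real (s mod 2))^2 * m0 (a s)
       + m2 (b s) - 2 * real (s mod 2) * m1 (b s) + (real (s mod 2))^2 * m0 (b s))/2"
  unfolding R2 using good_avg[OF good_shift(1)[OF gA] good_shift(1)[OF gB]] good_shift[OF gA] good_shift[OF gB]
  by (auto simp: algebra_simps)

lemma momA_odd:
  "m0 (a (2 * s + 1)) = (m0 (a s) + m0 (b s))/2"
  "m1 (a (2 * s + 1)) = (m1 (a s) + real (s mod 2) * m0 (a s) + m1 (b s) + (1 - real (s mod 2)) * m0 (b s))/2"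
  "m2 (a (2 * s + 1)) = (m2 (a s) + 2 * real (s mod 2) * m1 (a s) + (real (s mod 2))^2 * m0 (a s)
       + m2 (b s) + 2 * (1 - real (s mod 2)) * m1 (b s) + (1 - real (s mod 2))^2 * m0 (b s))/2"
  unfolding R3 using good_avg[OF good_shift(1)[OF gA] good_shift(1)[OF gB]] good_shift[OF gA] good_shift[OF gB]
  by (auto simp: algebra_simps)

lemma momB_odd:
  "m0 (b (2 * s + 1)) = (m0 (a (s+1)) + m0 (b (s+1)))/2"
  "m1 (b (2 * s + 1)) = (m1 (a (s+1)) + m1 (b (s+1)) - m0 (b (s+1)))/2"
  "m2 (b (2 * s + 1)) = (m2 (a (s+1)) + m2 (b (s+1)) - 2 * m1 (b (s+1)) + m0 (b (s+1)))/2"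
  unfolding R4 using good_avg[OF gA good_shift(1)[OF gB]] good_shift[OF gB]
  by (auto simp: algebra_simps)



lemma means: "m0 (a t) = 1 \<and> m0 (b t) = 1 \<and> m1 (a t) = (if odd t then 1/2 else 0) \<and> m1 (b t) = (if odd t then -1/2 else 0)"
proof (induction t rule: less_induct)
  case (less t)
  have a0: "a 0 = delta0" "b 0 = delta0" using hd_a[OF hd0a] hd_b[OF hd0b] by auto
  consider "t = 0" | "t = 1" | s where "t = 2 * s" "1 \<le> s" | s where "t = 2 * s + 1" "1 \<le> s"
    using cases4[of t] by blast
  then show ?case
  proof cases
    case 1
    then show ?thesis using a0 good_delta0 by simp
  next
    case 2
    have A: "m0 (a 1) = 1" "m1 (a 1) = 1/2" using momA_odd[of 0] a0 good_delta0 by simp_all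
    have B0: "m0 (b 1) = (m0 (a 1) + m0 (b 1))/2" using momB_odd(1)[of 0] by simp
    have B1: "m1 (b 1) = (m1 (a 1) + m1 (b 1) - m0 (b 1))/2" using momB_odd(2)[of 0] by simp
    have "m0 (b 1) = 1" using B0 A by argo
    moreover have "m1 (b 1) = -1/2" using B1 A \<open>m0 (b 1) = 1\<close> by argo
    ultimately show ?thesis using A 2 by simp
  next
    case 3
    then have "s < t" by simp
    note IH = less.IH[OF this]
    show ?thesis using IH 3 momA_even[of s] momB_even[of s]
      by (cases "even s") (auto simp: odd_iff_mod_2_eq_one split: if_splits)
  next
    case 4
    then have "s < t" "s + 1 < t" by simp_all
    note IH1 = less.IH[OF this(1)] and IH2 = less.IH[OF this(2)]
    show ?thesis using IH1 IH2 4 momA_odd[of s] momB_odd[of s]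
      by (cases "even s") (auto simp: odd_iff_mod_2_eq_one split: if_splits)
  qed
qed

lemma m0a[simp]: "m0 (a t) = 1" and m0b[simp]: "m0 (b t) = 1"
  and m1a[simp]: "m1 (a t) = (if odd t then 1/2 else 0)"
  and m1b[simp]: "m1 (b t) = (if odd t then -1/2 else 0)"
  using means by auto

lemma mA: "m_alpha t = m1 (a t)" by (simp add: m_alpha_def m1_def)
lemma mB: "m_beta t = m1 (b t)" by (simp add: m_beta_def m1_def)

lemma vA: "v_alpha t = m2 (a t) - (m1 (a t))^2"
  unfolding v_alpha_def mA var_eq[OF gA m0a] by (simp add: power2_eq_square)
lemma vB: "v_beta t = m2 (b t) - (m1 (b t))^2"
  unfolding v_beta_def mB var_eq[OF gB m0b] by (simp add: power2_eq_square)

lemma VA_even: "v_alpha (2 * s) = (v_alpha s + v_beta s)/2 + (if odd s then 1/4 else 0)"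
  unfolding vA vB momA_even by (cases "even s") (auto simp: power2_eq_square field_simps)
lemma VB_even: "v_beta (2 * s) = (v_alpha s + v_beta s)/2 + (if odd s then 9/4 else 0)"
  unfolding vA vB momB_even by (cases "even s") (auto simp: power2_eq_square field_simps odd_iff_mod_2_eq_one)
lemma VA_odd: "v_alpha (2 * s + 1) = (v_alpha s + v_beta s)/2 + (if odd s then 1 else 1/4)"
  unfolding vA vB momA_odd by (cases "even s") (auto simp: power2_eq_square field_simps odd_iff_mod_2_eq_one)
lemma VB_odd: "v_beta (2 * s + 1) = (v_alpha (s+1) + v_beta (s+1))/2 + (if odd s then 1/4 else 1)"
  unfolding vA vB momB_odd by (cases "even s") (auto simp: power2_eq_square field_simps)

lemma V00: "v_alpha 0 = 0" "v_beta 0 = 0"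
  using hd_a[OF hd0a] hd_b[OF hd0b] good_delta0 by (simp_all add: vA vB)

lemma V1: "v_alpha 1 = 1/4" "v_beta 1 = 9/4"
proof -
  show "v_alpha 1 = 1/4" using VA_odd[of 0] V00 by simp
  have "v_beta 1 = (v_alpha 1 + v_beta 1)/2 + 1" using VB_odd[of 0] by simp
  then show "v_beta 1 = 9/4" using \<open>v_alpha 1 = 1/4\<close> by argo
qed

lemma V2: "v_alpha 2 = 6/4" "v_beta 2 = 14/4"
  using VA_even[of 1] VB_even[of 1] unfolding V1 by simp_all



lemma exhaust_6:
  fixes x :: 6
  shows "x = 1 \<or> x = 2 \<or> x = 3 \<or> x = 4 \<or> x = 5 \<or> x = 6"
proof (induct x)
  case (of_int z)
  then have "z = 0 \<or> z = 1 \<or> z = 2 \<or> z = 3 \<or> z = 4 \<or> z = 5" by fastforce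
  then show ?case by auto
qed
lemma UNIV_6: "(UNIV :: 6 set) = {1,2,3,4,5,6}"
  using exhaust_6 by auto

lemma sum6: "(\<Sum>i\<in>(UNIV::6 set). f i) = f 1 + f 2 + f 3 + f 4 + f 5 + (f 6::real)"
  unfolding UNIV_6 by simp

lemma vec_eq6: "(x::real^6) = y \<longleftrightarrow> x$1 = y$1 \<and> x$2 = y$2 \<and> x$3 = y$3 \<and> x$4 = y$4 \<and> x$5 = y$5 \<and> x$6 = y$6"
proof
  assume H: "x$1 = y$1 \<and> x$2 = y$2 \<and> x$3 = y$3 \<and> x$4 = y$4 \<and> x$5 = y$5 \<and> x$6 = y$6"
  show "x = y" unfolding vec_eq_iff
  proof
    fix i :: 6
    from exhaust_6[of i] H show "x$i = y$i" by (elim disjE) auto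
  qed
qed simp
lemma v1: "(vector [x1,x2,x3,x4,x5,x6] :: 'a::zero^6) $ 1 = x1" by (simp add: vector_def)
lemma v2: "(vector [x1,x2,x3,x4,x5,x6] :: 'a::zero^6) $ 2 = x2" by (simp add: vector_def)
lemma v3: "(vector [x1,x2,x3,x4,x5,x6] :: 'a::zero^6) $ 3 = x3" by (simp add: vector_def)
lemma v4: "(vector [x1,x2,x3,x4,x5,x6] :: 'a::zero^6) $ 4 = x4" by (simp add: vector_def)
lemma v5: "(vector [x1,x2,x3,x4,x5,x6] :: 'a::zero^6) $ 5 = x5" by (simp add: vector_def)
lemma v6: "(vector [x1,x2,x3,x4,x5,x6] :: 'a::zero^6) $ 6 = x6" by (simp add: vector_def)
lemmas vv = v1 v2 v3 v4 v5 v6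
lemma A0r: "A0 $ 1 = vector [1,1,0,0,0,0]" "A0 $ 2 = vector [1,1,0,0,0,0]" "A0 $ 3 = vector [1,1,0,0,0,0]"
  "A0 $ 4 = vector [0,0,1,1,0,0]" "A0 $ 5 = vector [0,0,1,1,0,0]" "A0 $ 6 = vector [0,0,1,1,0,0]"
  unfolding A0_def by (fact v1 v2 v3 v4 v5 v6)+
lemma A1r: "A1 $ 1 = vector [0,0,1,1,0,0]" "A1 $ 2 = vector [0,0,1,1,0,0]" "A1 $ 3 = vector [0,0,1,1,0,0]"
  "A1 $ 4 = vector [0,0,0,0,1,1]" "A1 $ 5 = vector [0,0,0,0,1,1]" "A1 $ 6 = vector [0,0,0,0,1,1]"
  unfolding A1_def by (fact v1 v2 v3 v4 v5 v6)+
lemma mv6: fixes A :: "real^6^'m" shows "(A *v x) $ i = A$i$1 * x$1 + A$i$2 * x$2 + A$i$3 * x$3 + A$i$4 * x$4 + A$i$5 * x$5 + A$i$6 * (x$6::real)"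
  unfolding matrix_vector_mult_def vec_lambda_beta by (rule sum6)
lemma A0v: "A0 *v x = vector [x$1+x$2, x$1+x$2, x$1+x$2, x$3+x$4, x$3+x$4, x$3+x$4]"
  unfolding vec_eq6 mv6 A0r vv by simp
lemma A1v: "A1 *v x = vector [x$3+x$4, x$3+x$4, x$3+x$4, x$5+x$6, x$5+x$6, x$5+x$6]"
  unfolding vec_eq6 mv6 A1r vv by simp

lemma vec_lin: "(c::real) *\<^sub>R vector [x1,x2,x3,x4,x5,x6] + e *\<^sub>R vector [y1,y2,y3,y4,y5,y6]
   = (vector [c*x1 + e*y1, c*x2 + e*y2, c*x3 + e*y3, c*x4 + e*y4, c*x5 + e*y5, c*x6 + e*y6] :: real^6)"
  unfolding vec_eq6 by (simp add: vv)

lemma partM: "M t = vector [0, 0, 1/2, -1/2, 0, 0]"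
proof -
  have "2 * t + 2 = 2 * (t + 1)" by simp
  then show ?thesis unfolding M_def mA mB by simp
qed

lemma partV0: "V (2*t) = (1/2) *\<^sub>R (A0 *v V t) + (1/4) *\<^sub>R vector [0, 0, 1, 4, 1, 9]"
proof -
  have q: "2 * (2 * t) + 2 = 2 * (2 * t + 1)" by simp
  have h1: "v_alpha (2 * (2 * t)) = (v_alpha (2 * t) + v_beta (2 * t))/2" using VA_even[of "2*t"] by simp
  have h2: "v_beta (2 * (2 * t)) = (v_alpha (2 * t) + v_beta (2 * t))/2" using VB_even[of "2*t"] by simp
  have h3: "v_alpha (2 * (2 * t) + 1) = (v_alpha (2 * t) + v_beta (2 * t))/2 + 1/4" using VA_odd[of "2*t"] by simp
  have h4: "v_beta (2 * (2 * t) + 1) = (v_alpha (2 * t + 1) + v_beta (2 * t + 1))/2 + 1" using VB_odd[of "2*t"] by simp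
  have h5: "v_alpha (2 * (2 * t + 1)) = (v_alpha (2 * t + 1) + v_beta (2 * t + 1))/2 + 1/4" using VA_even[of "2*t+1"] by simp
  have h6: "v_beta (2 * (2 * t + 1)) = (v_alpha (2 * t + 1) + v_beta (2 * t + 1))/2 + 9/4" using VB_even[of "2*t+1"] by simp
  show ?thesis unfolding V_def q h1 h2 h3 h4 h5 h6 A0v vv vec_lin
    by (simp add: field_simps)
qed

lemma partV1: "V (2*t+1) = (1/2) *\<^sub>R (A1 *v V t) + (1/4) *\<^sub>R vector [1, 9, 4, 1, 0, 0]"
proof -
  have q: "2 * (2 * t + 1) + 2 = 2 * (2 * t + 2)" by simp
  have q2: "2 * t + 2 = 2 * (t + 1)" by simp
  have h1: "v_alpha (2 * (2 * t + 1)) = (v_alpha (2 * t + 1) + v_beta (2 * t + 1))/2 + 1/4" using VA_even[of "2*t+1"] by simp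
  have h2: "v_beta (2 * (2 * t + 1)) = (v_alpha (2 * t + 1) + v_beta (2 * t + 1))/2 + 9/4" using VB_even[of "2*t+1"] by simp
  have h3: "v_alpha (2 * (2 * t + 1) + 1) = (v_alpha (2 * t + 1) + v_beta (2 * t + 1))/2 + 1" using VA_odd[of "2*t+1"] by simp
  have h4: "v_beta (2 * (2 * t + 1) + 1) = (v_alpha (2 * t + 2) + v_beta (2 * t + 2))/2 + 1/4"
    using VB_odd[of "2*t+1"] by (simp add: add.assoc)
  have h5: "v_alpha (2 * (2 * t + 2)) = (v_alpha (2 * t + 2) + v_beta (2 * t + 2))/2"
    using VA_even[of "2*t+2"] by simp
  have h6: "v_beta (2 * (2 * t + 2)) = (v_alpha (2 * t + 2) + v_beta (2 * t + 2))/2"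
    using VB_even[of "2*t+2"] by simp
  show ?thesis unfolding V_def q h1 h2 h3 h4 h5 h6 A1v vv vec_lin
    by (simp add: field_simps)
qed

lemma partVz: "V 0 = (1/4) *\<^sub>R vector [0, 0, 1, 9, 6, 14]"
proof -
  have e: "V 0 = vector [v_alpha 0, v_beta 0, v_alpha 1, v_beta 1, v_alpha 2, v_beta 2]"
    by (simp add: V_def numeral_2_eq_2)
  show ?thesis unfolding e V00 V1 V2 vec_eq6 by (simp add: vv)
qed


theorem proposition3p4:
  fixes t :: nat
  shows "M t = vector [0, 0, 1/2, -1/2, 0, 0]
    \<and> V (2*t) = (1/2) *\<^sub>R (A0 *v V t) + (1/4) *\<^sub>R vector [0, 0, 1, 4, 1, 9]
    \<and> V (2*t+1) = (1/2) *\<^sub>R (A1 *v V t) + (1/4) *\<^sub>R vector [1, 9, 4, 1, 0, 0]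
    \<and> V 0 = (1/4) *\<^sub>R vector [0, 0, 1, 9, 6, 14]"
  using partM partV0 partV1 partVz by blast

end
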